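(* Let $u$ be a finite game with player set $\mathcal V$ and strategy profile space $\mathcal X$, and let $x^*\in\mathcal X$ be a Nash equilibrium of $u$. Then for every nonempty subset of players $\mathcal R\subseteq\mathcal V$, the projection $x^*_{\mathcal R}$ is a Nash equilibrium of every game $\tilde u\in\mathcal U_{\mathcal R}$ such that $$\|u-\tilde u\|_\infty\le\mu_u(x^* ).$$
   Context: A finite game consists of a finite nonempty player set $\mathcal V$, finite nonempty action sets $\mathcal A_i$, profile space $\mathcal X=\prod_{i\in\mathcal V}\mathcal A_i$, and utilities $u_i:\mathcal X\to\mathbb R$; $\mathcal U$ is the space of all such games, normed by $\|\delta\|_\infty=\max_{i\in\mathcal V}\max_{x\in\mathcal X}|\delta_i(x)|$. Profiles $x,y$ are $i$-comparable, $x\sim_i y$, if they coincide except possibly in entry $i$; for a game $v$, $\chi^v_i(x)=\min_{y\sim_i x,\,y\neq x}\{v_i(x)-v_i(y)\}$, and a (pure strategy) Nash equilibrium of $v$ is a profile $x^*$ with $\chi^v_i(x^* )\ge0$ for every player $i$. The margin of robustness $\mu_u(x^* )$ of a Nash equilibrium $x^*$ of $u$ is the infimum of $\|\delta\|_\infty$ over perturbations $\delta\in\mathcal U$ such that $x^*$ is not a Nash equilibrium of $u+\delta$. For nonempty $\mathcal R\subseteq\mathcal V$, $\mathcal X_{\mathcal R}=\prod_{i\in\mathcal R}\mathcal A_i$, $x_{\mathcal R}$ denotes the restriction of $x\in\mathcal X$ to the coordinates in $\mathcal R$, and $\mathcal U_{\mathcal R}$ is the set of games with player set $\mathcal R$ and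 profile space $\mathcal X_{\mathcal R}$. For $u\in\mathcal U$ and $\tilde u\in\mathcal U_{\mathcal R}$, $\|u-\tilde u\|_\infty=\max_{i\in\mathcal R}\max_{x\in\mathcal X}|u_i(x)-\tilde u_i(x_{\mathcal R})|$. *)

theory Defs
  imports "HOL-Analysis.Analysis" "HOL-Library.Extended_Real"
begin

text \<open>Profiles are extensional functions in PiE V A; utilities are functions
  u :: player => profile => real (only values for i in V, x in PiE V A matter).\<close>

definition finite_game :: "'p set \<Rightarrow> ('p \<Rightarrow> 'a set) \<Rightarrow> bool" where
  "finite_game V A \<longleftrightarrow> finite V \<and> V \<noteq> {} \<and> (\<forall>i\<in>V. finite (A i) \<and> A i \<noteq> {})"

definition comparable :: "'p \<Rightarrow> ('p \<Rightarrow> 'a) \<Rightarrow> ('p \<Rightarrow> 'a) \<Rightarrow> bool" where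
  "comparable i x y \<longleftrightarrow> (\<forall>j. j \<noteq> i \<longrightarrow> x j = y j)"

text \<open>Pure Nash equilibrium: chi_i(x) >= 0 for all players, where chi_i(x) is the
  minimum of v_i(x) - v_i(y) over i-comparable y different from x (a minimum over
  the empty set imposing no constraint).\<close>
definition nash_eq :: "'p set \<Rightarrow> ('p \<Rightarrow> 'a set) \<Rightarrow> ('p \<Rightarrow> ('p \<Rightarrow> 'a) \<Rightarrow> real) \<Rightarrow> ('p \<Rightarrow> 'a) \<Rightarrow> bool" where
  "nash_eq V A v x \<longleftrightarrow> x \<in> PiE V A \<and>
     (\<forall>i\<in>V. \<forall>y\<in>PiE V A. comparable i x y \<and> y \<noteq> x \<longrightarrow> v i x - v i y \<ge> 0)"

definition game_norm :: "'p set \<Rightarrow> ('p \<Rightarrow> 'a set) \<Rightarrow> ('p \<Rightarrow> ('p \<Rightarrow> 'a) \<Rightarrow> real) \<Rightarrow> real" where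
  "game_norm V A d = Max {\<bar>d i x\<bar> | i x. i \<in> V \<and> x \<in> PiE V A}"

text \<open>Margin of robustness (in the extended reals; infimum of the empty set is +infinity).\<close>
definition margin :: "'p set \<Rightarrow> ('p \<Rightarrow> 'a set) \<Rightarrow> ('p \<Rightarrow> ('p \<Rightarrow> 'a) \<Rightarrow> real) \<Rightarrow> ('p \<Rightarrow> 'a) \<Rightarrow> ereal" where
  "margin V A u x = Inf {ereal (game_norm V A d) | d.
       \<not> nash_eq V A (\<lambda>i y. u i y + d i y) x}"

definition sub_dist :: "'p set \<Rightarrow> ('p \<Rightarrow> 'a set) \<Rightarrow> 'p set \<Rightarrow> ('p \<Rightarrow> ('p \<Rightarrow> 'a) \<Rightarrow> real)
    \<Rightarrow> ('p \<Rightarrow> ('p \<Rightarrow> 'a) \<Rightarrow> real) \<Rightarrow> real" where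
  "sub_dist V A R u ut = Max {\<bar>u i x - ut i (restrict x R)\<bar> | i x. i \<in> R \<and> x \<in> PiE V A}"

end

theory Submission
  imports Defs
begin

lemma fin_set:
  assumes "finite_game V A" "R \<subseteq> V"
  shows "finite {f i x | i x. i \<in> R \<and> x \<in> PiE V A}"
proof -
  have fV: "finite V" using assms unfolding finite_game_def by auto
  have "finite (PiE V A)" using assms unfolding finite_game_def
    by (intro finite_PiE) auto
  hence "finite ((\<lambda>(i,x). f i x) ` (R \<times> PiE V A))"
    using fV assms(2) finite_subset by blast
  moreover have "{f i x | i x. i \<in> R \<and> x \<in> PiE V A} = (\<lambda>(i,x). f i x) ` (R \<times> PiE V A)"
    by auto
  ultimately show ?thesis by simp
qed

lemma norm_le:
  assumes "finite_game V A" "\<And>i x. i \<in> V \<Longrightarrow> x \<in> PiE V A \<Longrightarrow> \<bar>d i x\<bar> \<le> K"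
  shows "game_norm V A d \<le> K"
proof -
  have ne: "PiE V A \<noteq> {}" using assms(1) unfolding finite_game_def
    by (simp add: PiE_eq_empty_iff)
  then obtain x where x: "x \<in> PiE V A" by blast
  obtain i where i: "i \<in> V" using assms(1) unfolding finite_game_def by auto
  have f: "finite {\<bar>d i x\<bar> | i x. i \<in> V \<and> x \<in> PiE V A}"
    using fin_set[OF assms(1), of V "\<lambda>i x. \<bar>d i x\<bar>"] by simp
  have n: "{\<bar>d i x\<bar> | i x. i \<in> V \<and> x \<in> PiE V A} \<noteq> {}" using x i by blast
  show ?thesis unfolding game_norm_def using f n assms(2)
    by (subst Max_le_iff) auto
qed

lemma le_norm:
  assumes "finite_game V A" "i \<in> V" "x \<in> PiE V A"
  shows "\<bar>d i x\<bar> \<le> game_norm V A d"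
proof -
  have f: "finite {\<bar>d i x\<bar> | i x. i \<in> V \<and> x \<in> PiE V A}"
    using fin_set[OF assms(1), of V "\<lambda>i x. \<bar>d i x\<bar>"] by simp
  show ?thesis unfolding game_norm_def using f assms by (intro Max_ge) auto
qed

lemma le_sub_dist:
  assumes "finite_game V A" "R \<subseteq> V" "i \<in> R" "x \<in> PiE V A"
  shows "\<bar>u i x - ut i (restrict x R)\<bar> \<le> sub_dist V A R u ut"
proof -
  have f: "finite {\<bar>u i x - ut i (restrict x R)\<bar> | i x. i \<in> R \<and> x \<in> PiE V A}"
    using fin_set[OF assms(1,2), of "\<lambda>i x. \<bar>u i x - ut i (restrict x R)\<bar>"] by simp
  show ?thesis unfolding sub_dist_def using f assms by (intro Max_ge) auto
qed

lemma robust: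
  assumes fg: "finite_game V A" and ne: "nash_eq V A u xs"
    and le: "ereal (game_norm V A d) \<le> margin V A u xs"
  shows "nash_eq V A (\<lambda>i y. u i y + d i y) xs"
proof (rule ccontr)
  assume nn: "\<not> ?thesis"
  have xsP: "xs \<in> PiE V A" using ne unfolding nash_eq_def by auto
  have "\<exists>i\<in>V. \<exists>y\<in>PiE V A. comparable i xs y \<and> y \<noteq> xs \<and> u i xs + d i xs - (u i y + d i y) < 0"
    using nn xsP unfolding nash_eq_def by (meson not_le)
  then obtain i y where iy: "i \<in> V" "y \<in> PiE V A" "comparable i xs y" "y \<noteq> xs"
    and neg: "u i xs + d i xs - (u i y + d i y) < 0"
    by blast
  define a where "a = u i xs - u i y"
  define b where "b = d i xs - d i y"
  have a0: "a \<ge> 0" using ne iy unfolding nash_eq_def a_def by auto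
  have ab: "a + b < 0" using neg unfolding a_def b_def by simp
  hence bneg: "b < 0" using a0 by simp
  define t where "t = (1 + a / (- b)) / 2"
  have q: "a / (-b) < 1" using ab bneg by (simp add: divide_simps)
  have q0: "a / (-b) \<ge> 0" using a0 bneg by (intro divide_nonneg_pos) auto
  have t1: "t < 1" and t0: "t \<ge> 0" using q q0 unfolding t_def by auto
  have "t > a / (-b)" using q unfolding t_def by simp
  hence "t * (-b) > a" using bneg by (simp add: divide_simps)
  hence negt: "a + t * b < 0" by simp
  define c where "c = game_norm V A d"
  have "\<bar>d i xs\<bar> \<le> c" "\<bar>d i y\<bar> \<le> c"
    using le_norm[OF fg iy(1)] xsP iy(2) unfolding c_def by auto
  hence cpos: "c > 0" using bneg unfolding b_def by linarith
  have tn: "game_norm V A (\<lambda>j z. t * d j z) \<le> t * c"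
  proof (rule norm_le[OF fg])
    fix j z assume "j \<in> V" "z \<in> PiE V A"
    hence "\<bar>d j z\<bar> \<le> c" using le_norm[OF fg] unfolding c_def by blast
    thus "\<bar>t * d j z\<bar> \<le> t * c" using t0 by (simp add: abs_mult mult_left_mono)
  qed
  have "\<not> nash_eq V A (\<lambda>j z. u j z + t * d j z) xs"
  proof
    assume "nash_eq V A (\<lambda>j z. u j z + t * d j z) xs"
    hence "u i xs + t * d i xs - (u i y + t * d i y) \<ge> 0"
      using iy unfolding nash_eq_def by auto
    thus False using negt unfolding a_def b_def by (simp add: algebra_simps)
  qed
  hence "margin V A u xs \<le> ereal (game_norm V A (\<lambda>j z. t * d j z))"
    unfolding margin_def by (intro Inf_lower) blast
  also have "\<dots> \<le> ereal (t * c)" using tn by simp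
  also have "\<dots> < ereal c" using t1 cpos by simp
  finally show False using le unfolding c_def by simp
qed

theorem proposition3:
  fixes V R :: "'p set" and A :: "'p \<Rightarrow> 'a set"
    and u ut :: "'p \<Rightarrow> ('p \<Rightarrow> 'a) \<Rightarrow> real" and xs :: "'p \<Rightarrow> 'a"
  assumes "finite_game V A"
    and "nash_eq V A u xs"
    and "R \<subseteq> V" and "R \<noteq> {}"
    and "ereal (sub_dist V A R u ut) \<le> margin V A u xs"
  shows "nash_eq R A ut (restrict xs R)"
proof -
  define d where "d = (\<lambda>i x. if i \<in> R then ut i (restrict x R) - u i x else 0)"
  have xsP: "xs \<in> PiE V A" using assms(2) unfolding nash_eq_def by auto
  have sd0: "sub_dist V A R u ut \<ge> 0"
  proof -
    obtain i where "i \<in> R" using assms(4) by blast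
    thus ?thesis using le_sub_dist[OF assms(1,3) _ xsP] by (meson abs_ge_zero order_trans)
  qed
  have "game_norm V A d \<le> sub_dist V A R u ut"
  proof (rule norm_le[OF assms(1)])
    fix i x assume "i \<in> V" "x \<in> PiE V A"
    thus "\<bar>d i x\<bar> \<le> sub_dist V A R u ut"
      using le_sub_dist[OF assms(1,3), of i x u ut] sd0 unfolding d_def by auto
  qed
  hence "ereal (game_norm V A d) \<le> margin V A u xs" using assms(5) ereal_less_eq(3) order_trans by metis
  hence N: "nash_eq V A (\<lambda>i y. u i y + d i y) xs" using robust[OF assms(1,2)] by blast
  show ?thesis unfolding nash_eq_def
  proof (intro conjI ballI impI)
    show "restrict xs R \<in> PiE R A" using xsP assms(3) by auto
  next
    fix i y assume i: "i \<in> R" and y: "y \<in> PiE R A" and c: "comparable i (restrict xs R) y \<and> y \<noteq> restrict xs R"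
    define y' where "y' = (\<lambda>j. if j \<in> R then y j else xs j)"
    have y'P: "y' \<in> PiE V A" using y xsP assms(3) unfolding y'_def by (auto simp: PiE_def Pi_def extensional_def)
    have ry: "restrict y' R = y" using y unfolding y'_def by (auto simp: PiE_def extensional_def)
    have cmp: "comparable i xs y'" using c unfolding comparable_def y'_def
      by (metis restrict_apply')
    have ne: "y' \<noteq> xs"
    proof
      assume "y' = xs"
      hence "restrict xs R = y" using ry by simp
      thus False using c by simp
    qed
    have "u i xs + d i xs - (u i y' + d i y') \<ge> 0" using N i assms(3) y'P cmp ne unfolding nash_eq_def by blast
    thus "ut i (restrict xs R) - ut i y \<ge> 0" using i ry unfolding d_def by simp
  qed
qed

end
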